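(* Let $f, g \in \mathrm{Inj}(\Omega)$ and suppose $f = hh_1gh_2h^{-1}$ for some $h \in \mathrm{Sym}(\Omega)$ and $h_1, h_2 \in \mathrm{Fin}(\Omega)$. Then $f \approx_{\mathrm{fin}} g$.
   Context: $\Omega$ is a countably infinite set; maps are written on the right and composed left to right. $\mathrm{Inj}(\Omega)$ is the monoid of injective maps $\Omega\to\Omega$, $\mathrm{Sym}(\Omega)$ the permutation group, $\mathrm{Fin}(\Omega)$ the permutations moving only finitely many points. For $f\in\mathrm{Inj}(\Omega)$, a cycle of $f$ is a nonempty $\Sigma\subseteq\Omega$ such that (a) for all $\alpha\in\Omega$, $(\alpha)f\in\Sigma$ iff $\alpha\in\Sigma$, and (b) no proper nonempty subset of $\Sigma$ satisfies (a). A forward cycle is an infinite cycle $\Sigma$ with $\Sigma\setminus(\Omega)f\ne\emptyset$; an open cycle is an infinite cycle that is not forward. For $n\in\mathbb{Z}_+$, $(f)\mathrm{C}_n$ is the cardinal number of cycles of $f$ of cardinality $n$; $(f)\mathrm{C}_{\mathrm{open}}$, $(f)\mathrm{C}_{\mathrm{fwd}}$ are the numbers of open and forward cycles. $f\approx_{\mathrm{fin}}g$ means: $(f)\mathrm{C}_{\mathrm{open}}=(g)\mathrm{C}_{\mathrm{open}}$; $(f)\mathrm{C}_{\mathrm{fwd}}=(g)\mathrm{C}_{\mathrm{fwd}}$; $(f)\mathrm{C}_n\ne(g)\mathrm{C}_n$ for only finitely many $n\in\mathbb{Z}_+$; and whenever $(f)\mathrm{C}_n\ne(g)\mathrm{C}_n$,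 both are finite. *)

theory Defs
  imports Main "HOL-Library.Countable" "HOL-Library.Extended_Nat"
begin

text \<open>Omega is modelled as the universe of a countable type 'a with infinite UNIV.
Maps are Isabelle functions; the paper composes left to right, so the paper's
product p q (first p, then q) is the Isabelle function q \<circ> p.\<close>

definition Fin_perm :: "('a \<Rightarrow> 'a) \<Rightarrow> bool" where
  "Fin_perm h \<longleftrightarrow> bij h \<and> finite {x. h x \<noteq> x}"

definition closed_under :: "('a \<Rightarrow> 'a) \<Rightarrow> 'a set \<Rightarrow> bool" where
  "closed_under f S \<longleftrightarrow> (\<forall>x. f x \<in> S \<longleftrightarrow> x \<in> S)"

definition is_cycle :: "('a \<Rightarrow> 'a) \<Rightarrow> 'a set \<Rightarrow> bool" where
  "is_cycle f S \<longleftrightarrow> S \<noteq> {} \<and> closed_under f S \<and>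
     (\<forall>T. T \<subseteq> S \<and> T \<noteq> {} \<and> T \<noteq> S \<longrightarrow> \<not> closed_under f T)"

definition is_fwd_cycle :: "('a \<Rightarrow> 'a) \<Rightarrow> 'a set \<Rightarrow> bool" where
  "is_fwd_cycle f S \<longleftrightarrow> is_cycle f S \<and> infinite S \<and> S - range f \<noteq> {}"

definition is_open_cycle :: "('a \<Rightarrow> 'a) \<Rightarrow> 'a set \<Rightarrow> bool" where
  "is_open_cycle f S \<longleftrightarrow> is_cycle f S \<and> infinite S \<and> \<not> is_fwd_cycle f S"

text \<open>Cardinal of a set of cycles. Since Omega is countable, any such cardinal is
either finite or aleph_0, so enat is a faithful codomain.\<close>
definition ecard :: "'b set \<Rightarrow> enat" where
  "ecard S = (if finite S then enat (card S) else \<infinity>)"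

definition C_n :: "nat \<Rightarrow> ('a \<Rightarrow> 'a) \<Rightarrow> enat" where
  "C_n n f = ecard {S. is_cycle f S \<and> finite S \<and> card S = n}"

definition C_open :: "('a \<Rightarrow> 'a) \<Rightarrow> enat" where
  "C_open f = ecard {S. is_open_cycle f S}"

definition C_fwd :: "('a \<Rightarrow> 'a) \<Rightarrow> enat" where
  "C_fwd f = ecard {S. is_fwd_cycle f S}"

definition approx_fin :: "('a \<Rightarrow> 'a) \<Rightarrow> ('a \<Rightarrow> 'a) \<Rightarrow> bool" where
  "approx_fin f g \<longleftrightarrow> C_open f = C_open g \<and> C_fwd f = C_fwd g \<and>
     finite {n. 0 < n \<and> C_n n f \<noteq> C_n n g} \<and>
     (\<forall>n. 0 < n \<and> C_n n f \<noteq> C_n n g \<longrightarrow> C_n n f \<noteq> \<infinity> \<and> C_n n g \<noteq> \<infinity>)"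

end

theory Submission
  imports Defs
begin


lemma closed_Inter: "(\<And>S. S \<in> F \<Longrightarrow> closed_under f S) \<Longrightarrow> closed_under f (\<Inter>F)"
  unfolding closed_under_def by blast

lemma closed_Diff: "closed_under f S \<Longrightarrow> closed_under f T \<Longrightarrow> closed_under f (S - T)"
  unfolding closed_under_def by blast

lemma closed_Int: "closed_under f S \<Longrightarrow> closed_under f T \<Longrightarrow> closed_under f (S \<inter> T)"
  unfolding closed_under_def by blast

definition cyc :: "('a \<Rightarrow> 'a) \<Rightarrow> 'a \<Rightarrow> 'a set" where
  "cyc f x = \<Inter>{S. closed_under f S \<and> x \<in> S}"

lemma in_cyc: "x \<in> cyc f x" unfolding cyc_def by blast

lemma closed_cyc: "closed_under f (cyc f x)"
  unfolding cyc_def by (rule closed_Inter) blast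

lemma cyc_sub: "closed_under f S \<Longrightarrow> x \<in> S \<Longrightarrow> cyc f x \<subseteq> S"
  unfolding cyc_def by blast

lemma cycle_cyc: "is_cycle f (cyc f x)"
  unfolding is_cycle_def
proof (intro conjI allI impI)
  show "cyc f x \<noteq> {}" using in_cyc[of x f] by blast
  show "closed_under f (cyc f x)" by (rule closed_cyc)
  fix T assume T: "T \<subseteq> cyc f x \<and> T \<noteq> {} \<and> T \<noteq> cyc f x"
  show "\<not> closed_under f T"
  proof
    assume c: "closed_under f T"
    show False
    proof (cases "x \<in> T")
      case True then show False using cyc_sub[OF c True] T by blast
    next
      case False
      have "cyc f x \<subseteq> cyc f x - T" 
        by (rule cyc_sub[OF closed_Diff[OF closed_cyc c]]) (use False in_cyc[of x f] in blast)
      then show False using T by blast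
    qed
  qed
qed

lemma cycle_eq: "is_cycle f S \<Longrightarrow> x \<in> S \<Longrightarrow> S = cyc f x"
proof -
  assume S: "is_cycle f S" and x: "x \<in> S"
  have "closed_under f S" using S unfolding is_cycle_def by blast
  then have "cyc f x \<subseteq> S" by (rule cyc_sub) (rule x)
  moreover have "cyc f x \<noteq> {}" using in_cyc[of x f] by blast
  ultimately show ?thesis using S closed_cyc[of f x] unfolding is_cycle_def by blast
qed

lemma cycle_closed: "is_cycle f S \<Longrightarrow> closed_under f S"
  unfolding is_cycle_def by blast

lemma cycle_minimal: "is_cycle f S \<Longrightarrow> closed_under f T \<Longrightarrow> T \<subseteq> S \<Longrightarrow> T \<noteq> {} \<Longrightarrow> T = S"
  unfolding is_cycle_def by blast

lemma closed_funpow: "closed_under f S \<Longrightarrow> x \<in> S \<Longrightarrow> (f ^^ n) x \<in> S"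
  by (induction n) (auto simp: closed_under_def)

lemma cyc_f: "cyc f (f x) = cyc f x"
  using cycle_eq[OF cycle_cyc, of "f x" f x] closed_cyc[of f x] in_cyc[of x f]
  unfolding closed_under_def by blast

lemma finite_closed_of_endo:
  assumes "inj f" "finite Q" "f ` Q \<subseteq> Q"
  shows "closed_under f Q"
proof -
  have "f ` Q = Q" using endo_inj_surj[OF assms(2,3)] assms(1) inj_on_subset by blast
  then show ?thesis unfolding closed_under_def using assms(1) by (auto dest: injD)
qed

lemma finite_cycle_range:
  assumes "inj f" "is_cycle f S" "finite S"
  shows "S \<subseteq> range f"
proof -
  have "f ` S \<subseteq> S" using cycle_closed[OF assms(2)] unfolding closed_under_def by blast
  then have "f ` S = S" using endo_inj_surj[OF assms(3)] assms(1) inj_on_subset by blast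
  then show ?thesis by blast
qed

lemma orbit_cycle:
  assumes "inj f" "is_cycle f S" "x \<in> S" "x \<notin> range f"
  shows "S = range (\<lambda>n. (f ^^ n) x)"
proof -
  let ?O = "range (\<lambda>n. (f ^^ n) x)"
  have c: "closed_under f ?O"
    unfolding closed_under_def
  proof (intro allI iffI)
    fix z assume "f z \<in> ?O"
    then obtain n where n: "f z = (f ^^ n) x" by blast
    show "z \<in> ?O"
    proof (cases n)
      case 0 then show ?thesis using n assms(4) by (metis funpow_0 rangeI)
    next
      case (Suc m) then have "f z = f ((f ^^ m) x)" using n by simp
      then show ?thesis using assms(1) by (auto dest: injD)
    qed
  next
    fix z assume "z \<in> ?O"
    then obtain n where "z = (f ^^ n) x" by blast
    then have "f z = (f ^^ Suc n) x" by simp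
    then show "f z \<in> ?O" by blast
  qed
  have "?O \<subseteq> S" using closed_funpow[OF cycle_closed[OF assms(2)] assms(3)] by blast
  moreover have "x \<in> ?O" by (metis funpow_0 rangeI)
  ultimately show ?thesis using cycle_minimal[OF assms(2) c] by blast
qed

lemma common_forward:
  assumes "is_cycle f S" "x \<in> S" "y \<in> S"
  shows "\<exists>i j. (f ^^ i) x = (f ^^ j) y"
proof -
  let ?R = "{z. \<exists>i j. (f ^^ i) z = (f ^^ j) y}"
  have c: "closed_under f ?R"
    unfolding closed_under_def
  proof (intro allI iffI)
    fix z assume "f z \<in> ?R"
    then obtain i j where "(f ^^ i) (f z) = (f ^^ j) y" by blast
    then have "(f ^^ Suc i) z = (f ^^ j) y" by (simp add: funpow_Suc_right del: funpow.simps)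
    then show "z \<in> ?R" by blast
  next
    fix z assume "z \<in> ?R"
    then obtain i j where ij: "(f ^^ i) z = (f ^^ j) y" by blast
    show "f z \<in> ?R"
    proof (cases i)
      case 0
      then have "(f ^^ 0) (f z) = (f ^^ Suc j) y" using ij by simp
      then show ?thesis by blast
    next
      case (Suc m)
      then have "(f ^^ m) (f z) = (f ^^ j) y" using ij by (simp add: funpow_Suc_right del: funpow.simps)
      then show ?thesis by blast
    qed
  qed
  have "y \<in> ?R" by (metis (mono_tags) mem_Collect_eq)
  then have "S \<inter> ?R = S" using cycle_minimal[OF assms(1) closed_Int[OF cycle_closed[OF assms(1)] c]] assms(3) by blast
  then show ?thesis using assms(2) by blast
qed

lemma common_forward_set:
  assumes "is_cycle f S" "finite F" "F \<subseteq> S"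
  shows "\<exists>y\<in>S. \<forall>e\<in>F. \<exists>i. (f ^^ i) e = y"
  using assms(2,3)
proof (induction F rule: finite_induct)
  case empty then show ?case using assms(1) unfolding is_cycle_def by blast
next
  case (insert e F)
  then obtain y0 where y0: "y0 \<in> S" "\<forall>e\<in>F. \<exists>i. (f ^^ i) e = y0" by blast
  obtain i j where ij: "(f ^^ i) e = (f ^^ j) y0" using common_forward[OF assms(1), of e y0] insert y0 by blast
  have "(f ^^ j) y0 \<in> S" using closed_funpow[OF cycle_closed[OF assms(1)] y0(1)] .
  moreover have "\<forall>e'\<in>insert e F. \<exists>i. (f ^^ i) e' = (f ^^ j) y0"
  proof
    fix e' assume "e' \<in> insert e F"
    then show "\<exists>i. (f ^^ i) e' = (f ^^ j) y0"
    proof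
      assume "e' = e" then show ?thesis using ij by blast
    next
      assume "e' \<in> F"
      then obtain i' where "(f ^^ i') e' = y0" using y0 by blast
      then have "(f ^^ (j + i')) e' = (f ^^ j) y0" by (simp add: funpow_add)
      then show ?thesis by blast
    qed
  qed
  ultimately show ?case by blast
qed




definition Acyc :: "('a \<Rightarrow> 'a) \<Rightarrow> 'a set \<Rightarrow> 'a set set" where
  "Acyc f E = {S. is_cycle f S \<and> S \<inter> E \<noteq> {}}"

definition outs :: "('a \<Rightarrow> 'a) \<Rightarrow> 'a set \<Rightarrow> 'a set" where
  "outs f W = {z\<in>W. f z \<notin> W}"

lemma Acyc_sub: "Acyc f E \<subseteq> cyc f ` E"
proof
  fix S assume "S \<in> Acyc f E"
  then obtain x where "is_cycle f S" "x \<in> S" "x \<in> E" unfolding Acyc_def by blast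
  then show "S \<in> cyc f ` E" using cycle_eq[of f S x] by blast
qed

lemma finite_Acyc: "finite E \<Longrightarrow> finite (Acyc f E)"
  by (rule finite_subset[OF Acyc_sub]) simp

lemma cycles_disj: "is_cycle f S \<Longrightarrow> is_cycle f T \<Longrightarrow> x \<in> S \<Longrightarrow> x \<in> T \<Longrightarrow> S = T"
  using cycle_eq[of f S x] cycle_eq[of f T x] by simp

lemma lower:
  assumes "inj f" "finite W" "E \<subseteq> W"
  shows "card {S\<in>Acyc f E. infinite S} \<le> card (outs f W)"
proof -
  have ex: "\<exists>z. z \<in> S \<inter> outs f W" if S: "S \<in> Acyc f E" "infinite S" for S
  proof (rule ccontr)
    assume no: "\<not> ?thesis"
    have cyc: "is_cycle f S" using S unfolding Acyc_def by blast
    have "f ` (S \<inter> W) \<subseteq> S \<inter> W"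
      using no cycle_closed[OF cyc] unfolding outs_def closed_under_def by blast
    then have c: "closed_under f (S \<inter> W)"
      using finite_closed_of_endo[OF assms(1) finite_Int[OF disjI2[OF assms(2)]]] by blast
    have "S \<inter> W \<noteq> {}" using S assms(3) unfolding Acyc_def by blast
    then have "S \<inter> W = S" using cycle_minimal[OF cyc c] by blast
    then show False using S assms(2) by (metis finite_Int)
  qed
  define \<phi> where "\<phi> S = (SOME z. z \<in> S \<inter> outs f W)" for S
  have phi: "\<phi> S \<in> S \<inter> outs f W" if "S \<in> {S\<in>Acyc f E. infinite S}" for S
    using ex that unfolding \<phi>_def by (metis (mono_tags, lifting) mem_Collect_eq someI_ex)
  have "inj_on \<phi> {S\<in>Acyc f E. infinite S}"
  proof (rule inj_onI)
    fix S T assume S: "S \<in> {S\<in>Acyc f E. infinite S}" and T: "T \<in> {S\<in>Acyc f E. infinite S}"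
      and eq: "\<phi> S = \<phi> T"
    have "\<phi> S \<in> S" "\<phi> T \<in> T" using phi[OF S] phi[OF T] by blast+
    moreover have "is_cycle f S" "is_cycle f T" using S T unfolding Acyc_def by blast+
    ultimately show "S = T" using cycles_disj[of f S T "\<phi> S"] eq by simp
  qed
  moreover have "\<phi> ` {S\<in>Acyc f E. infinite S} \<subseteq> outs f W" using phi by blast
  moreover have "finite (outs f W)" using assms(2) unfolding outs_def by simp
  ultimately show ?thesis by (rule card_inj_on_le)
qed

lemma upper:
  assumes "inj f" "finite E"
  shows "\<exists>W. finite W \<and> E \<subseteq> W \<and> card (outs f W) \<le> card {S\<in>Acyc f E. infinite S}"
proof -
  let ?Ai = "{S\<in>Acyc f E. infinite S}"
  let ?Af = "{S\<in>Acyc f E. finite S}"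
  have yex: "\<exists>y\<in>S. \<forall>e\<in>S \<inter> E. \<exists>i. (f ^^ i) e = y" if "S \<in> ?Ai" for S
    using common_forward_set[of f S "S \<inter> E"] that assms(2) unfolding Acyc_def by blast
  define y where "y S = (SOME y. y \<in> S \<and> (\<forall>e\<in>S \<inter> E. \<exists>i. (f ^^ i) e = y))" for S
  have y: "y S \<in> S \<and> (\<forall>e\<in>S \<inter> E. \<exists>i. (f ^^ i) e = y S)" if "S \<in> ?Ai" for S
  proof -
    from yex[OF that] have "\<exists>y. y \<in> S \<and> (\<forall>e\<in>S \<inter> E. \<exists>i. (f ^^ i) e = y)" by blast
    then show ?thesis unfolding y_def by (rule someI_ex)
  qed
  define ie where "ie e = (SOME i. (f ^^ i) e = y (cyc f e))" for e
  have ie: "(f ^^ ie e) e = y (cyc f e)" if "e \<in> E" "infinite (cyc f e)" for e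
  proof -
    have "cyc f e \<in> ?Ai" using that cycle_cyc[of f e] in_cyc[of e f] unfolding Acyc_def by fast
    then have "\<exists>i. (f ^^ i) e = y (cyc f e)" using y in_cyc[of e f] that(1) by blast
    then show ?thesis unfolding ie_def by (rule someI_ex)
  qed
  define M where "M = Max (ie ` E)"
  have M: "ie e \<le> M" if "e \<in> E" for e using that assms(2) unfolding M_def by simp
  define Y where "Y = y ` ?Ai"
  define W where "W = {z. \<exists>u\<in>Y. \<exists>i\<le>M. (f ^^ i) z = u} \<union> \<Union>?Af"
  have finA: "finite (Acyc f E)" using finite_Acyc[OF assms(2)] .
  have finY: "finite Y" unfolding Y_def using finA by simp
  have "{z. \<exists>u\<in>Y. \<exists>i\<le>M. (f ^^ i) z = u} = (\<Union>u\<in>Y. \<Union>i\<in>{..M}. {z. (f ^^ i) z = u})" by blast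
  moreover have "finite {z. (f ^^ i) z = u}" for i u
  proof -
    have "{z. (f ^^ i) z = u} = (f ^^ i) -` {u}" by blast
    then show ?thesis using finite_vimageI[of "{u}" "f ^^ i"] assms(1) by simp
  qed
  ultimately have fin1: "finite {z. \<exists>u\<in>Y. \<exists>i\<le>M. (f ^^ i) z = u}" using finY by simp
  have "finite (\<Union>?Af)" using finA by auto
  then have finW: "finite W" unfolding W_def using fin1 by simp
  have EW: "E \<subseteq> W"
  proof
    fix e assume e: "e \<in> E"
    have A: "cyc f e \<in> Acyc f E" using e cycle_cyc[of f e] in_cyc[of e f] unfolding Acyc_def by fast
    show "e \<in> W"
    proof (cases "finite (cyc f e)")
      case True then show ?thesis using A in_cyc[of e f] unfolding W_def by blast
    next
      case False
      then have "cyc f e \<in> ?Ai" using A by blast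
      then have "y (cyc f e) \<in> Y" unfolding Y_def by blast
      then show ?thesis using ie[OF e False] M[OF e] unfolding W_def by blast
    qed
  qed
  have "outs f W \<subseteq> Y"
  proof
    fix z assume z: "z \<in> outs f W"
    then have zW: "z \<in> W" and fz: "f z \<notin> W" unfolding outs_def by auto
    show "z \<in> Y"
    proof (cases "z \<in> \<Union>?Af")
      case True
      then obtain S where "S \<in> ?Af" "z \<in> S" by blast
      moreover then have "f z \<in> S" using cycle_closed[of f S] unfolding Acyc_def closed_under_def by blast
      ultimately show ?thesis using fz unfolding W_def by blast
    next
      case False
      then obtain u i where u: "u \<in> Y" "i \<le> M" "(f ^^ i) z = u" using zW unfolding W_def by blast
      show ?thesis
      proof (cases i)
        case 0 then show ?thesis using u by simp
      next
        case (Suc j)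
        then have "(f ^^ j) (f z) = u" using u by (simp add: funpow_Suc_right del: funpow.simps)
        moreover have "j \<le> M" using u(2) Suc by simp
        ultimately have "f z \<in> {z. \<exists>u\<in>Y. \<exists>i\<le>M. (f ^^ i) z = u}" using u(1) by blast
        then have "f z \<in> W" unfolding W_def by blast
        then show ?thesis using fz by blast
      qed
    qed
  qed
  then have "card (outs f W) \<le> card Y" using finY by (simp add: card_mono)
  also have "\<dots> \<le> card ?Ai" unfolding Y_def by (rule card_image_le) (use finA in simp)
  finally show ?thesis using finW EW by blast
qed

definition Nset :: "('a \<Rightarrow> 'a) \<Rightarrow> 'a set \<Rightarrow> 'a set" where
  "Nset f E = {x. x \<notin> range f \<and> cyc f x \<inter> E \<noteq> {}}"

lemma fwd_bij:
  assumes "inj f"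
  shows "bij_betw (cyc f) (Nset f E) {S\<in>Acyc f E. is_fwd_cycle f S}"
  unfolding bij_betw_def
proof (intro conjI)
  show "inj_on (cyc f) (Nset f E)"
  proof (rule inj_onI)
    fix x x' assume x: "x \<in> Nset f E" and x': "x' \<in> Nset f E" and eq: "cyc f x = cyc f x'"
    have "cyc f x = range (\<lambda>n. (f ^^ n) x)"
      using orbit_cycle[OF assms cycle_cyc in_cyc] x unfolding Nset_def by blast
    then obtain n where n: "x' = (f ^^ n) x" using eq in_cyc[of x' f] by blast
    show "x = x'"
    proof (cases n)
      case 0 then show ?thesis using n by simp
    next
      case (Suc m) then have "x' = f ((f ^^ m) x)" using n by simp
      then show ?thesis using x' unfolding Nset_def by blast
    qed
  qed
  show "cyc f ` Nset f E = {S\<in>Acyc f E. is_fwd_cycle f S}"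
  proof
    show "cyc f ` Nset f E \<subseteq> {S\<in>Acyc f E. is_fwd_cycle f S}"
    proof
      fix S assume "S \<in> cyc f ` Nset f E"
      then obtain x where x: "x \<in> Nset f E" and S: "S = cyc f x" by blast
      have "infinite S" using finite_cycle_range[OF assms cycle_cyc, of x] in_cyc[of x f] x S
        unfolding Nset_def by blast
      then show "S \<in> {S\<in>Acyc f E. is_fwd_cycle f S}"
        using x S cycle_cyc[of f x] in_cyc[of x f] unfolding Nset_def Acyc_def is_fwd_cycle_def by blast
    qed
  next
    show "{S\<in>Acyc f E. is_fwd_cycle f S} \<subseteq> cyc f ` Nset f E"
    proof
      fix S assume S: "S \<in> {S\<in>Acyc f E. is_fwd_cycle f S}"
      then obtain x where x: "x \<in> S" "x \<notin> range f" unfolding is_fwd_cycle_def by blast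
      have cS: "is_cycle f S" using S unfolding Acyc_def by blast
      have "S = cyc f x" using cycle_eq[OF cS x(1)] .
      then show "S \<in> cyc f ` Nset f E" using x S unfolding Nset_def Acyc_def by blast
    qed
  qed
qed

lemma fwd_card:
  assumes "inj f" "finite E"
  shows "finite (Nset f E) \<and> card (Nset f E) = card {S\<in>Acyc f E. is_fwd_cycle f S}"
  using fwd_bij[OF assms(1), of E] finite_Acyc[OF assms(2), of f]
  by (metis (no_types, lifting) bij_betw_finite bij_betw_same_card finite_subset mem_Collect_eq subsetI)




lemma ecard_eq:
  assumes "C \<inter> A = {}" "C \<inter> A' = {}" "finite A" "finite A'" "card A = card A'"
  shows "ecard (C \<union> A) = ecard (C \<union> A')"
proof (cases "finite C")
  case True
  then show ?thesis using assms by (simp add: ecard_def card_Un_disjoint)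
next
  case False then show ?thesis by (simp add: ecard_def)
qed

lemma ecard_fin:
  assumes "finite A" "finite A'" "ecard (C \<union> A) \<noteq> ecard (C \<union> A')"
  shows "ecard (C \<union> A) \<noteq> \<infinity> \<and> ecard (C \<union> A') \<noteq> \<infinity>"
  using assms by (cases "finite C") (auto simp: ecard_def)

locale pair =
  fixes g k :: "'a \<Rightarrow> 'a" and D E :: "'a set"
  assumes inj_g: "inj g" and inj_k: "inj k" and finE: "finite E"
    and DE: "D \<union> g ` D \<union> k ` D \<subseteq> E"
    and agree: "\<And>x. x \<notin> D \<Longrightarrow> k x = g x"
begin

lemma swap: "pair k g D E"
proof
  show "inj k" by (rule inj_k)
  show "inj g" by (rule inj_g)
  show "finite E" by (rule finE)
  show "D \<union> k ` D \<union> g ` D \<subseteq> E" using DE by blast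
  fix x assume "x \<notin> D" then show "g x = k x" using agree by simp
qed

lemma common:
  assumes S: "is_cycle g S" "S \<inter> E = {}"
  shows "is_cycle k S \<and> S - range g = S - range k"
proof -
  have nD: "x \<notin> D" if "x \<in> S" for x using that S(2) DE by blast
  have cg: "closed_under g S" using cycle_closed[OF S(1)] .
  have ck: "closed_under k S"
    unfolding closed_under_def
  proof (intro allI iffI)
    fix x assume kx: "k x \<in> S"
    show "x \<in> S"
    proof (cases "x \<in> D")
      case True then have "k x \<in> E" using DE by blast
      then show ?thesis using kx S(2) by blast
    next
      case False then show ?thesis using kx agree cg unfolding closed_under_def by metis
    qed
  next
    fix x assume "x \<in> S" then show "k x \<in> S" using nD agree cg unfolding closed_under_def by metis
  qed
  have min: "\<not> closed_under k T" if T: "T \<subseteq> S" "T \<noteq> {}" "T \<noteq> S" for T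
  proof
    assume ckT: "closed_under k T"
    have "closed_under g T"
      unfolding closed_under_def
    proof
      fix x show "g x \<in> T \<longleftrightarrow> x \<in> T"
      proof (cases "x \<in> S")
        case True then show ?thesis using nD agree ckT unfolding closed_under_def by metis
      next
        case False then have "g x \<notin> S" using cg unfolding closed_under_def by blast
        then show ?thesis using False T(1) by blast
      qed
    qed
    then show False using S(1) T unfolding is_cycle_def by blast
  qed
  have "is_cycle k S" using S(1) ck min unfolding is_cycle_def by blast
  moreover have "S - range g = S - range k"
  proof -
    have "x \<in> range k" if xs: "x \<in> S" "x \<in> range g" for x
    proof -
      obtain z where z: "x = g z" using xs by blast
      then have "z \<in> S" using cg xs unfolding closed_under_def by blast
      then show ?thesis using z agree nD by (metis rangeI)
    qed
    moreover have "x \<in> range g" if xs: "x \<in> S" "x \<in> range k" for x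
    proof -
      obtain z where z: "x = k z" using xs by blast
      then have "z \<in> S" using ck xs unfolding closed_under_def by blast
      then show ?thesis using z agree nD by (metis rangeI)
    qed
    ultimately show ?thesis by blast
  qed
  ultimately show ?thesis by blast
qed

lemma common_iff:
  "(is_cycle g S \<and> S \<inter> E = {}) \<longleftrightarrow> (is_cycle k S \<and> S \<inter> E = {})"
  using common pair.common[OF swap] by blast

lemma Ueq: "{x. cyc g x \<inter> E \<noteq> {}} = {x. cyc k x \<inter> E \<noteq> {}}"
proof -
  have *: "cyc g x = cyc k x" if "cyc g x \<inter> E = {}" for x
    using common[OF cycle_cyc that] cycle_eq[of k "cyc g x" x] in_cyc[of x g] by blast
  have **: "cyc k x = cyc g x" if "cyc k x \<inter> E = {}" for x
    using pair.common[OF swap cycle_cyc that] cycle_eq[of g "cyc k x" x] in_cyc[of x k] by blast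
  show ?thesis using * ** by blast
qed

lemma outs_eq: "E \<subseteq> W \<Longrightarrow> outs g W = outs k W"
  unfolding outs_def using DE agree by (smt (verit) Collect_cong Un_iff image_eqI subset_iff)

lemma Icard: "card {S\<in>Acyc g E. infinite S} = card {S\<in>Acyc k E. infinite S}"
proof -
  obtain W where W: "finite W" "E \<subseteq> W" "card (outs g W) \<le> card {S\<in>Acyc g E. infinite S}"
    using upper[OF inj_g finE] by blast
  obtain W' where W': "finite W'" "E \<subseteq> W'" "card (outs k W') \<le> card {S\<in>Acyc k E. infinite S}"
    using upper[OF inj_k finE] by blast
  have "card {S\<in>Acyc k E. infinite S} \<le> card (outs k W)" using lower[OF inj_k W(1,2)] .
  moreover have "card {S\<in>Acyc g E. infinite S} \<le> card (outs g W')" using lower[OF inj_g W'(1,2)] .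
  moreover have "outs g W = outs k W" "outs g W' = outs k W'" using outs_eq W(2) W'(2) by blast+
  ultimately have "card {S\<in>Acyc k E. infinite S} \<le> card {S\<in>Acyc g E. infinite S}"
      "card {S\<in>Acyc g E. infinite S} \<le> card {S\<in>Acyc k E. infinite S}"
    using W(3) W'(3) by simp_all
  then show ?thesis by (rule le_antisym[rotated])
qed

lemma Nform:
  "card (Nset g E) = card ({x. cyc g x \<inter> E \<noteq> {}} - g ` ({x. cyc g x \<inter> E \<noteq> {}} - D)) - card D"
proof -
  define U where "U = {x. cyc g x \<inter> E \<noteq> {}}"
  define V where "V = g ` (U - D)"
  have clU: "g x \<in> U \<longleftrightarrow> x \<in> U" for x unfolding U_def by (simp add: cyc_f)
  have EU: "E \<subseteq> U" unfolding U_def using in_cyc[of _ g] by fast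
  have DU: "D \<subseteq> U" using EU DE by blast
  have N: "Nset g E = U - g ` U" unfolding Nset_def U_def using clU U_def by auto
  have gU: "g ` U = V \<union> g ` D" unfolding V_def using DU by blast
  have gD: "g ` D \<subseteq> U - V" unfolding V_def using DU clU inj_g by (auto dest: injD)
  have N2: "U - g ` U = (U - V) - g ` D" using gU by blast
  have finN: "finite (Nset g E)" using fwd_card[OF inj_g finE] by blast
  have finD: "finite D" using finE DE finite_subset by blast
  have "U - V \<subseteq> (U - g ` U) \<union> g ` D" using gU by blast
  then have finUV: "finite (U - V)" using finN N finD by (metis finite_Un finite_imageI finite_subset)
  have "card (Nset g E) = card (U - V) - card (g ` D)" using N N2 card_Diff_subset[OF _ gD] finD by simp
  also have "card (g ` D) = card D" using card_image inj_g inj_on_subset by blast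
  finally show ?thesis unfolding U_def V_def .
qed

lemma Ncard: "card (Nset g E) = card (Nset k E)"
proof -
  have "k ` ({x. cyc k x \<inter> E \<noteq> {}} - D) = g ` ({x. cyc g x \<inter> E \<noteq> {}} - D)"
    using Ueq agree by auto
  then show ?thesis using Nform pair.Nform[OF swap] Ueq by simp
qed

end



context pair begin

lemma Fcard: "card {S\<in>Acyc g E. is_fwd_cycle g S} = card {S\<in>Acyc k E. is_fwd_cycle k S}"
  using fwd_card[OF inj_g finE] fwd_card[OF inj_k finE] Ncard by simp

lemma open_diff: "{S\<in>Acyc f E. is_open_cycle f S} = {S\<in>Acyc f E. infinite S} - {S\<in>Acyc f E. is_fwd_cycle f S}"
  unfolding is_open_cycle_def is_fwd_cycle_def Acyc_def by blast

lemma Ocard: "card {S\<in>Acyc g E. is_open_cycle g S} = card {S\<in>Acyc k E. is_open_cycle k S}"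
proof -
  have s: "{S\<in>Acyc f E. is_fwd_cycle f S} \<subseteq> {S\<in>Acyc f E. infinite S}" for f
    unfolding is_fwd_cycle_def by blast
  have fin: "finite {S\<in>Acyc f E. P S}" for f P using finite_Acyc[OF finE] by simp
  have a: "card ({S\<in>Acyc f E. infinite S} - {S\<in>Acyc f E. is_fwd_cycle f S})
     = card {S\<in>Acyc f E. infinite S} - card {S\<in>Acyc f E. is_fwd_cycle f S}" for f
    using card_Diff_subset[OF fin s] .
  show ?thesis unfolding open_diff a Icard Fcard ..
qed

lemma split: "{S. Q S} = {S. Q S \<and> S \<inter> E = {}} \<union> {S\<in>Acyc f E. Q S}"
  if "\<And>S. Q S \<Longrightarrow> is_cycle f S" for f Q
  using that unfolding Acyc_def by blast

lemma same_common:
  assumes "\<And>S. S \<inter> E = {} \<Longrightarrow> is_cycle g S \<Longrightarrow> is_cycle k S \<Longrightarrow> (P g S \<longleftrightarrow> P k S)"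
    and "\<And>f S. P f S \<Longrightarrow> is_cycle f S"
  shows "{S. P g S \<and> S \<inter> E = {}} = {S. P k S \<and> S \<inter> E = {}}"
  using assms common_iff by blast

lemma approx: "approx_fin k g"
proof -
  have fin: "finite {S\<in>Acyc f E. P S}" for f P using finite_Acyc[OF finE] by simp
  have disj: "{S. P S \<and> S \<inter> E = {}} \<inter> {S\<in>Acyc f E. P' S} = {}" for P P' f
    unfolding Acyc_def by blast
  have rng: "S \<inter> E = {} \<Longrightarrow> is_cycle g S \<Longrightarrow> S - range g = S - range k" for S
    using common by blast
  have cyo: "\<And>f S. is_open_cycle f S \<Longrightarrow> is_cycle f S" unfolding is_open_cycle_def by blast
  have co: "{S. is_open_cycle g S \<and> S \<inter> E = {}} = {S. is_open_cycle k S \<and> S \<inter> E = {}}"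
    by (rule same_common[OF _ cyo]) (use rng in \<open>auto simp: is_open_cycle_def is_fwd_cycle_def\<close>)
  have eg: "{S. is_open_cycle g S} = {S. is_open_cycle g S \<and> S \<inter> E = {}} \<union> {S\<in>Acyc g E. is_open_cycle g S}"
    by (rule split) (rule cyo)
  have ek: "{S. is_open_cycle k S} = {S. is_open_cycle k S \<and> S \<inter> E = {}} \<union> {S\<in>Acyc k E. is_open_cycle k S}"
    by (rule split) (rule cyo)
  have O: "C_open k = C_open g"
    unfolding C_open_def eg ek co by (rule ecard_eq[OF disj disj fin fin Ocard[symmetric]])
  have cyf: "\<And>f S. is_fwd_cycle f S \<Longrightarrow> is_cycle f S" unfolding is_fwd_cycle_def by blast
  have cf: "{S. is_fwd_cycle g S \<and> S \<inter> E = {}} = {S. is_fwd_cycle k S \<and> S \<inter> E = {}}"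
    by (rule same_common[OF _ cyf]) (use rng in \<open>auto simp: is_fwd_cycle_def\<close>)
  have fg: "{S. is_fwd_cycle g S} = {S. is_fwd_cycle g S \<and> S \<inter> E = {}} \<union> {S\<in>Acyc g E. is_fwd_cycle g S}"
    by (rule split) (rule cyf)
  have fk: "{S. is_fwd_cycle k S} = {S. is_fwd_cycle k S \<and> S \<inter> E = {}} \<union> {S\<in>Acyc k E. is_fwd_cycle k S}"
    by (rule split) (rule cyf)
  have F: "C_fwd k = C_fwd g"
    unfolding C_fwd_def fg fk cf by (rule ecard_eq[OF disj disj fin fin Fcard[symmetric]])
  have cn: "{S. (\<lambda>f S. is_cycle f S \<and> finite S \<and> card S = n) g S \<and> S \<inter> E = {}}
     = {S. (\<lambda>f S. is_cycle f S \<and> finite S \<and> card S = n) k S \<and> S \<inter> E = {}}" for n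
    by (rule same_common) auto
  have Cn: "C_n n f = ecard ({S. (is_cycle f S \<and> finite S \<and> card S = n) \<and> S \<inter> E = {}}
      \<union> {S\<in>Acyc f E. finite S \<and> card S = n})" for n f
    unfolding C_n_def
    by (rule arg_cong[where f = ecard]) (auto simp: Acyc_def)
  have Cn1: "C_n n k \<noteq> C_n n g \<longrightarrow> C_n n k \<noteq> \<infinity> \<and> C_n n g \<noteq> \<infinity>" for n
  proof -
    let ?C = "{S. (is_cycle k S \<and> finite S \<and> card S = n) \<and> S \<inter> E = {}}"
    have 1: "C_n n k = ecard (?C \<union> {S\<in>Acyc k E. finite S \<and> card S = n})" using Cn[of n k] .
    have 2: "C_n n g = ecard (?C \<union> {S\<in>Acyc g E. finite S \<and> card S = n})" using Cn[of n g] cn[of n] by simp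
    show ?thesis unfolding 1 2
      using ecard_fin[OF fin[of k "\<lambda>S. finite S \<and> card S = n"] fin[of g "\<lambda>S. finite S \<and> card S = n"]] by blast
  qed
  have "{n. 0 < n \<and> C_n n k \<noteq> C_n n g} \<subseteq> card ` (Acyc g E \<union> Acyc k E)"
  proof
    fix n assume n: "n \<in> {n. 0 < n \<and> C_n n k \<noteq> C_n n g}"
    show "n \<in> card ` (Acyc g E \<union> Acyc k E)"
    proof (rule ccontr)
      assume no: "n \<notin> card ` (Acyc g E \<union> Acyc k E)"
      have e1: "{S\<in>Acyc g E. finite S \<and> card S = n} = {}" using no by blast
      have e2: "{S\<in>Acyc k E. finite S \<and> card S = n} = {}" using no by blast
      have "C_n n k = C_n n g" unfolding Cn e1 e2 Un_empty_right using cn[of n] by simp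
      then show False using n by blast
    qed
  qed
  moreover have "finite (card ` (Acyc g E \<union> Acyc k E))" using finite_Acyc[OF finE] by simp
  ultimately show ?thesis unfolding approx_fin_def using O F Cn1 finite_subset by blast
qed

end



lemma ecard_bij: "bij_betw \<phi> A B \<Longrightarrow> ecard A = ecard B"
  unfolding ecard_def using bij_betw_finite bij_betw_same_card by metis

locale conj =
  fixes f k h :: "'a \<Rightarrow> 'a"
  assumes bh: "bij h" and fd: "f = inv h \<circ> k \<circ> h"
begin

lemma hinv: "h (inv h y) = y" "inv h (h x) = x"
  using bh by (simp_all add: bij_is_surj surj_f_inv_f bij_is_inj)

lemma closed_iff: "closed_under f S \<longleftrightarrow> closed_under k (h ` S)"
proof -
  have inj: "inj h" using bh bij_is_inj by blast
  have a: "f x \<in> S \<longleftrightarrow> k (h x) \<in> h ` S" for x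
    using fd hinv inj by (auto simp: inj_image_mem_iff) (metis imageI)
  have b: "x \<in> S \<longleftrightarrow> h x \<in> h ` S" for x using inj by (simp add: inj_image_mem_iff)
  show ?thesis unfolding closed_under_def
    by (metis a b hinv(1))
qed

lemma pre_im: "h -` (h ` S) = S" "h ` (h -` T) = T"
  using bh by (auto simp: bij_def inj_vimage_image_eq surj_image_vimage_eq)

lemma cycle_iff: "is_cycle f S \<longleftrightarrow> is_cycle k (h ` S)"
proof
  assume S: "is_cycle f S"
  show "is_cycle k (h ` S)" unfolding is_cycle_def
  proof (intro conjI allI impI)
    show "h ` S \<noteq> {}" using S unfolding is_cycle_def by blast
    show "closed_under k (h ` S)" using S closed_iff unfolding is_cycle_def by blast
    fix T assume T: "T \<subseteq> h ` S \<and> T \<noteq> {} \<and> T \<noteq> h ` S"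
    have "h -` T \<subseteq> S" "h -` T \<noteq> {}" "h -` T \<noteq> S" using T pre_im by (metis vimage_mono, metis image_empty, metis)
    then have "\<not> closed_under f (h -` T)" using S unfolding is_cycle_def by blast
    then show "\<not> closed_under k T" using closed_iff pre_im by metis
  qed
next
  assume S: "is_cycle k (h ` S)"
  show "is_cycle f S" unfolding is_cycle_def
  proof (intro conjI allI impI)
    show "S \<noteq> {}" using S unfolding is_cycle_def by blast
    show "closed_under f S" using S closed_iff unfolding is_cycle_def by blast
    fix T assume T: "T \<subseteq> S \<and> T \<noteq> {} \<and> T \<noteq> S"
    have "h ` T \<subseteq> h ` S" "h ` T \<noteq> {}" "h ` T \<noteq> h ` S" using T pre_im by (blast, blast, metis)
    then show "\<not> closed_under f T" using S closed_iff unfolding is_cycle_def by blast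
  qed
qed

lemma range_iff: "x \<in> range f \<longleftrightarrow> h x \<in> range k"
proof
  assume "x \<in> range f" then obtain z where "x = inv h (k (h z))" using fd by auto
  then show "h x \<in> range k" using hinv by auto
next
  assume "h x \<in> range k" then obtain y where "h x = k y" by auto
  then have "x = f (inv h y)" using fd hinv by (metis comp_apply)
  then show "x \<in> range f" by blast
qed

lemma fin_iff: "finite (h ` S) \<longleftrightarrow> finite S" "card (h ` S) = card S"
proof -
  have i: "inj_on h S" using bh bij_is_inj inj_on_subset subset_UNIV by metis
  show "finite (h ` S) \<longleftrightarrow> finite S" using finite_image_iff[OF i] .
  show "card (h ` S) = card S" using card_image[OF i] .
qed

lemma fwd_iff: "is_fwd_cycle f S \<longleftrightarrow> is_fwd_cycle k (h ` S)"
proof -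
  have "S - range f \<noteq> {} \<longleftrightarrow> h ` S - range k \<noteq> {}" using range_iff by blast
  then show ?thesis unfolding is_fwd_cycle_def using cycle_iff fin_iff by blast
qed

lemma open_iff: "is_open_cycle f S \<longleftrightarrow> is_open_cycle k (h ` S)"
  unfolding is_open_cycle_def using cycle_iff fin_iff fwd_iff by blast

lemma transfer: 
  assumes "\<And>S. P f S \<longleftrightarrow> P k (h ` S)"
  shows "ecard {S. P f S} = ecard {S. P k S}"
proof (rule ecard_bij)
  show "bij_betw ((`) h) {S. P f S} {S. P k S}"
    unfolding bij_betw_def
  proof
    show "inj_on ((`) h) {S. P f S}" by (metis inj_onI pre_im(1))
    show "(`) h ` {S. P f S} = {S. P k S}"
    proof
      show "(`) h ` {S. P f S} \<subseteq> {S. P k S}" using assms by blast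
      show "{S. P k S} \<subseteq> (`) h ` {S. P f S}"
      proof
        fix T assume "T \<in> {S. P k S}"
        then have "h -` T \<in> {S. P f S}" using assms pre_im by simp
        then show "T \<in> (`) h ` {S. P f S}" using pre_im by (metis image_eqI)
      qed
    qed
  qed
qed

lemma counts: "C_open f = C_open k" "C_fwd f = C_fwd k" "C_n n f = C_n n k"
proof -
  show "C_open f = C_open k" unfolding C_open_def by (rule transfer) (rule open_iff)
  show "C_fwd f = C_fwd k" unfolding C_fwd_def by (rule transfer) (rule fwd_iff)
  show "C_n n f = C_n n k" unfolding C_n_def
    by (rule transfer[where P = "\<lambda>f S. is_cycle f S \<and> finite S \<and> card S = n"]) (simp add: cycle_iff fin_iff)
qed

end

theorem mainTheorem8:
  fixes f g h h1 h2 :: "'a::countable \<Rightarrow> 'a"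
  assumes "infinite (UNIV :: 'a set)"
    and "inj f" and "inj g"
    and "bij h"
    and "Fin_perm h1" and "Fin_perm h2"
    and "f = inv h \<circ> h2 \<circ> g \<circ> h1 \<circ> h"
  shows "approx_fin f g"
proof -
  define k where "k = h2 \<circ> g \<circ> h1"
  define D where "D = {x. h1 x \<noteq> x} \<union> g -` {y. h2 y \<noteq> y}"
  define E where "E = D \<union> g ` D \<union> k ` D"
  have finD: "finite D" unfolding D_def using assms(3,5,6) finite_vimageI unfolding Fin_perm_def by blast
  have injk: "inj k" unfolding k_def using assms(3,5,6) unfolding Fin_perm_def
    by (metis bij_is_inj inj_compose)
  have p: "pair g k D E"
  proof
    show "inj g" by (rule assms(3))
    show "inj k" by (rule injk)
    show "finite E" unfolding E_def using finD by simp
    show "D \<union> g ` D \<union> k ` D \<subseteq> E" unfolding E_def by blast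
    fix x assume "x \<notin> D" then show "k x = g x" unfolding D_def k_def by auto
  qed
  have c: "conj f k h" using assms(4,7) unfolding k_def by unfold_locales (simp_all add: comp_assoc)
  show ?thesis using pair.approx[OF p] conj.counts[OF c] unfolding approx_fin_def by simp
qed


end
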